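(* Let $q>1$ and let $\rho$ be a positive $2\pi$-periodic $C^2$ function with $(\ln\rho)''(t)<\sqrt{q}/(1+\sqrt{q})$ for all $t$. For $\eta\in\mathbb{S}^1$ and $j,l\in\{1,2\}$ let $\mathcal{T}_{j,l}\eta$ be defined as follows: with $\eta_l=(-1)^{l-1}\eta$, $\theta_q=\arccos(1/\sqrt{q})$ and $h(\theta)=\frac{\sqrt{q}\sin\theta}{\sqrt{q}\cos\theta+1}$, the equation $(\ln\rho)'(\theta)=h(\theta-\theta_{\eta_l})$ has exactly two solutions $\theta\in\mathbb{R}/(2\pi\mathbb{Z})$; $\mathcal{T}_{1,l}\eta$ is the one with $\theta-\theta_{\eta_l}\in(\theta_q-\pi,\pi-\theta_q)$ and $\mathcal{T}_{2,l}\eta$ the one with $\theta-\theta_{\eta_l}\in(\pi-\theta_q,\pi+\theta_q)$ (mod $2\pi$). Then for each $\eta\in\mathbb{S}^1$ and each $l\in\{1,2\}$ (with $l+1$ taken in $\{1,2\}$ modulo $2$), $$\operatorname{sgn}\rho'(\mathcal{T}_{1,l}\eta)=(-1)^{l-1}\operatorname{sgn}\sin(\mathcal{T}_{1,l}\eta-\theta_\eta)=(-1)^{l-1}\operatorname{sgn}\sin(\mathcal{T}_{2,l+1}\eta-\theta_\eta)=\operatorname{sgn}\rho'(\mathcal{T}_{2,l+1}\eta).$$ Moreover, for each $l\in\{1,2\}$ and every $\eta\in\mathbb{S}^1$ with $\rho'(\theta_{\eta_l})\neq0$, one has $0<|\mathcal{T}_{2,l+1}\eta-\theta_{\eta_l}|<|\mathcal{T}_{1,l}\eta-\theta_{\eta_l}|<\pi-\theta_q$,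 and $$\rho(\mathcal{T}_{2,l+1}\eta)<\rho(\mathcal{T}_{1,l}\eta)\quad\text{and}\quad 0<|\sin(\mathcal{T}_{2,l+1}\eta-\theta_\eta)|<|\sin(\mathcal{T}_{1,l}\eta-\theta_\eta)|.$$
   Context: We identify $\mathbb{S}^1$ with $\mathbb{R}/(2\pi\mathbb{Z})$ via $\theta\mapsto(\cos\theta,\sin\theta)^T$; $\theta_\eta$ denotes the angular coordinate of $\eta$. Differences of angles such as $\mathcal{T}_{1,l}\eta-\theta_{\eta_l}$ and $\mathcal{T}_{2,l+1}\eta-\theta_{\eta_l}$ are taken as their representatives in $(-\pi,\pi]$ (so the first lies in $(\theta_q-\pi,\pi-\theta_q)$ and the second in $(-\theta_q,\theta_q)$). *)

theory Defs
  imports "HOL-Analysis.Analysis"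
begin

text \<open>Points of S^1 are unit complex numbers; the angular coordinate is Arg (in (-pi,pi]).\<close>

definition wrap :: "real \<Rightarrow> real" where
  "wrap x = x - 2 * pi * of_int \<lceil>(x - pi) / (2 * pi)\<rceil>"
  \<comment> \<open>representative of x mod 2pi in (-pi, pi]\<close>

definition theta_q :: "real \<Rightarrow> real" where
  "theta_q q = arccos (1 / sqrt q)"

definition hq :: "real \<Rightarrow> real \<Rightarrow> real" where
  "hq q \<theta> = sqrt q * sin \<theta> / (sqrt q * cos \<theta> + 1)"

definition C2 :: "(real \<Rightarrow> real) \<Rightarrow> bool" where
  "C2 f \<longleftrightarrow> (\<forall>t. f differentiable at t) \<and> (\<forall>t. deriv f differentiable at t)
      \<and> continuous_on UNIV (deriv (deriv f))"

text \<open>eta_l = (-1)^(l-1) eta; T j l eta is the solution theta in (-pi,pi] of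
  (ln rho)'(theta) = h(theta - theta_{eta_l}) with theta - theta_{eta_l} in
  (theta_q - pi, pi - theta_q) (j = 1) resp. (pi - theta_q, pi + theta_q) mod 2pi (j = 2).\<close>

definition Tmap :: "(real \<Rightarrow> real) \<Rightarrow> real \<Rightarrow> nat \<Rightarrow> nat \<Rightarrow> complex \<Rightarrow> real" where
  "Tmap \<rho> q j l \<eta> =
     (let a = Arg ((-1) ^ (l - 1) * \<eta>) in
      THE \<theta>. \<theta> \<in> {-pi<..pi} \<and>
            deriv (\<lambda>t. ln (\<rho> t)) \<theta> = hq q (\<theta> - a) \<and>
            (if j = 1 then wrap (\<theta> - a) \<in> {theta_q q - pi <..< pi - theta_q q}
             else \<bar>wrap (\<theta> - a)\<bar> > pi - theta_q q))"

end

theory Submission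
  imports Defs
begin

lemma wrap_unique:
  assumes "y \<in> {-pi<..pi}" "x = y + 2 * pi * of_int k"
  shows "wrap x = y"
proof -
  have "(x - pi) / (2 * pi) = (y - pi) / (2*pi) + of_int k" using assms(2) by (simp add: field_simps)
  moreover have "\<lceil>(y - pi) / (2*pi)\<rceil> = 0"
    using assms(1) by (subst ceiling_eq_iff) (auto simp: field_simps)
  ultimately have "\<lceil>(x - pi) / (2 * pi)\<rceil> = k" by simp
  then show ?thesis unfolding wrap_def using assms(2) by simp
qed

lemma wrap_props: "wrap x \<in> {-pi<..pi}" "\<exists>k::int. x = wrap x + 2 * pi * of_int k"
proof -
  let ?c = "\<lceil>(x - pi) / (2 * pi)\<rceil>"
  have a: "(x - pi) / (2*pi) \<le> of_int ?c" "of_int ?c < (x - pi) / (2*pi) + 1"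
    by linarith+
  have "(x - pi) / (2*pi) * (2*pi) \<le> of_int ?c * (2*pi)" by (rule mult_right_mono[OF a(1)]) simp
  then have "x - pi \<le> 2 * pi * of_int ?c" by (simp add: mult.commute)
  moreover have "2 * pi * of_int ?c < x + pi"
  proof -
    have "(x - pi) / (2*pi) + 1 = (x + pi) / (2*pi)" by (simp add: field_simps)
    then show ?thesis using a(2) by (simp add: pos_less_divide_eq mult.commute)
  qed
  ultimately show "wrap x \<in> {-pi<..pi}" unfolding wrap_def by auto
  show "\<exists>k::int. x = wrap x + 2 * pi * of_int k" unfolding wrap_def by (intro exI[of _ ?c]) simp
qed

lemma periodic_int:
  fixes f :: "real \<Rightarrow> 'a"
  assumes "\<And>t. f (t + 2 * pi) = f t"
  shows "f (t + 2 * pi * of_int k) = f t"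
proof -
  have n: "f (s + 2 * pi * of_nat n) = f s" for s n
  proof (induction n arbitrary: s)
    case 0 then show ?case by simp
  next
    case (Suc n)
    have "f (s + 2 * pi * of_nat (Suc n)) = f ((s + 2 * pi * of_nat n) + 2*pi)" by (simp add: algebra_simps)
    also have "\<dots> = f s" using assms Suc by simp
    finally show ?case .
  qed
  show ?thesis
  proof (cases "k \<ge> 0")
    case True then show ?thesis using n[of t "nat k"] by simp
  next
    case False
    have "f t = f ((t + 2 * pi * of_int k) + 2 * pi * of_nat (nat (-k)))" using False by simp
    then show ?thesis using n by simp
  qed
qed

lemma theta_q_props:
  assumes "q > (1::real)"
  shows "0 < theta_q q" "theta_q q < pi/2" "cos (theta_q q) = 1 / sqrt q" "sin (theta_q q) > 0"
proof -
  have r: "sqrt q > 1" using assms by simp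
  then have b: "0 < 1/sqrt q" "1/sqrt q < 1" by auto
  then have b2: "-1 < 1/sqrt q" by linarith
  show c: "cos (theta_q q) = 1 / sqrt q" unfolding theta_q_def using b b2 by (intro cos_arccos) auto
  show "0 < theta_q q" unfolding theta_q_def using b b2 arccos_lt_bounded[of "1/sqrt q"] by auto
  have "arccos (1/sqrt q) < arccos 0" using b by (intro arccos_less_arccos) auto
  then show "theta_q q < pi/2" unfolding theta_q_def by simp
  then show "sin (theta_q q) > 0" using \<open>0 < theta_q q\<close> by (intro sin_gt_zero) auto
qed

lemma cos_branch1:
  assumes "q > 1" "\<bar>t\<bar> < pi - theta_q q"
  shows "sqrt q * cos t + 1 > 0"
proof -
  note th = theta_q_props[OF assms(1)]
  have "cos (pi - theta_q q) < cos \<bar>t\<bar>" using th assms by (intro cos_monotone_0_pi) auto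
  then have "- (1 / sqrt q) < cos t" using th by simp
  moreover have "sqrt q > 0" using assms by simp
  ultimately have "sqrt q * (- (1/sqrt q)) < sqrt q * cos t" by (intro mult_strict_left_mono) auto
  then show ?thesis using assms by simp
qed

lemma cos_branch2:
  assumes "q > 1" "\<bar>t\<bar> < theta_q q"
  shows "sqrt q * cos t - 1 > 0"
proof -
  note th = theta_q_props[OF assms(1)]
  have "cos (theta_q q) < cos \<bar>t\<bar>" using th assms by (intro cos_monotone_0_pi) auto
  then have "1 / sqrt q < cos t" using th by simp
  moreover have "sqrt q > 0" using assms by simp
  ultimately have "sqrt q * (1/sqrt q) < sqrt q * cos t" by (intro mult_strict_left_mono) auto
  then show ?thesis using assms by simp
qed


definition kq :: "real \<Rightarrow> real \<Rightarrow> real" where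
  "kq q t = sqrt q * sin t / (sqrt q * cos t - 1)"

lemma alg1: "(c::real) * c + w * w = 1 \<Longrightarrow> c * r * (r * c + 1) + r * w * (w * r) = r * (r + c)"
proof -
  assume h: "c * c + w * w = 1"
  have "c * r * (r * c + 1) + r * w * (w * r) = r * r * (c * c + w * w) + r * c" by algebra
  then show ?thesis using h by (simp add: algebra_simps)
qed

lemma alg2: "(c::real) * c + w * w = 1 \<Longrightarrow> c * r * (r * c - 1) + r * w * (w * r) = r * (r - c)"
proof -
  assume h: "c * c + w * w = 1"
  have "c * r * (r * c - 1) + r * w * (w * r) = r * r * (c * c + w * w) - r * c" by algebra
  then show ?thesis using h by (simp add: algebra_simps)
qed

lemma hq_deriv:
  assumes "sqrt q * cos t + 1 \<noteq> 0"
  shows "(hq q has_real_derivative sqrt q * (sqrt q + cos t) / (sqrt q * cos t + 1)^2) (at t)"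
proof -
  have e: "hq q = (\<lambda>t. sqrt q * sin t / (sqrt q * cos t + 1))" by (auto simp: hq_def)
  have a: "sqrt q * cos t \<noteq> -1" using assms by auto
  show ?thesis unfolding e
    by (auto intro!: derivative_eq_intros simp: assms a power2_eq_square divide_simps alg1 alg2 sin_cos_squared_add3)
qed

lemma kq_deriv:
  assumes "sqrt q * cos t - 1 \<noteq> 0"
  shows "(kq q has_real_derivative sqrt q * (sqrt q - cos t) / (sqrt q * cos t - 1)^2) (at t)"
proof -
  have e: "kq q = (\<lambda>t. sqrt q * sin t / (sqrt q * cos t - 1))" by (auto simp: kq_def)
  have a: "sqrt q * cos t \<noteq> 1" using assms by auto
  show ?thesis unfolding e
    by (auto intro!: derivative_eq_intros simp: assms a power2_eq_square divide_simps alg1 alg2 sin_cos_squared_add3)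
qed

lemma hq_bound:
  assumes "q > 1" "sqrt q * cos t + 1 > 0"
  shows "sqrt q / (1 + sqrt q) \<le> sqrt q * (sqrt q + cos t) / (sqrt q * cos t + 1)^2"
proof -
  define r where "r = sqrt q"
  define c where "c = cos t"
  have r: "r > 1" using assms unfolding r_def by simp
  have c: "-1 \<le> c" "c \<le> 1" unfolding c_def by auto
  have d: "r * c + 1 > 0" using assms unfolding r_def c_def by simp
  have key: "(r*c+1)^2 \<le> (r + c) * (1 + r)"
  proof -
    have "(r + c) * (1 + r) - (r*c+1)^2 = r^2 * (1 - c^2) + (r - 1) * (1 - c)"
      by (simp add: algebra_simps power2_eq_square)
    moreover have "c^2 \<le> 1" using c by (simp add: abs_square_le_1)
    moreover have "(r - 1) * (1 - c) \<ge> 0" using r c by simp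
    moreover have "r^2 * (1 - c^2) \<ge> 0" using \<open>c^2 \<le> 1\<close> by simp
    ultimately show ?thesis by linarith
  qed
  have "r / (1 + r) \<le> r * (r + c) / (r*c+1)^2"
  proof -
    have "r / (1 + r) = r * (1 / (1 + r))" by simp
    have "r * (r*c+1)^2 \<le> r * ((r + c) * (1 + r))" using key r by (intro mult_left_mono) auto
    then show ?thesis using d r by (simp add: divide_simps)
  qed
  then show ?thesis unfolding r_def c_def .
qed

lemma kq_bound:
  assumes "q > 1" "sqrt q * cos t - 1 > 0"
  shows "sqrt q / (1 + sqrt q) < sqrt q * (sqrt q - cos t) / (sqrt q * cos t - 1)^2"
proof -
  define r where "r = sqrt q"
  define c where "c = cos t"
  have r: "r > 1" using assms unfolding r_def by simp
  have c: "-1 \<le> c" "c \<le> 1" unfolding c_def by auto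
  have d: "r * c - 1 > 0" using assms unfolding r_def c_def by simp
  have "r * c \<le> r * 1" using c r by (intro mult_left_mono) auto
  then have d2: "r * c - 1 \<le> r - 1" by simp
  have "(r*c-1)^2 \<le> (r-1)^2" using d d2 by (intro power_mono) auto
  also have "(r-1)^2 < (r - c) * (1 + r)"
  proof -
    have "(r-1)^2 < (r - 1) * (1 + r)" using r by (simp add: power2_eq_square)
    also have "\<dots> \<le> (r - c) * (1 + r)" using c r by (intro mult_right_mono) auto
    finally show ?thesis .
  qed
  finally have key: "(r*c-1)^2 < (r - c) * (1 + r)" .
  have "r / (1 + r) < r * (r - c) / (r*c-1)^2"
  proof -
    have "r * (r*c-1)^2 < r * ((r - c) * (1 + r))" using key r by (intro mult_strict_left_mono) auto
    then show ?thesis using d r by (simp add: divide_simps)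
  qed
  then show ?thesis unfolding r_def c_def .
qed


lemma root_decr:
  fixes G G' :: "real \<Rightarrow> real"
  assumes D: "\<And>t. L < t \<Longrightarrow> t < R \<Longrightarrow> (G has_real_derivative G' t) (at t)"
    and N: "\<And>t. L < t \<Longrightarrow> t < R \<Longrightarrow> G' t < 0"
    and "L < u" "u < v" "v < R"
  shows "G v < G u"
  using assms(4) by (rule DERIV_neg_imp_decreasing) (use assms in \<open>auto intro!: exI D N\<close>)

lemma root_exists:
  fixes G G' :: "real \<Rightarrow> real"
  assumes "L < R"
    and D: "\<And>t. L < t \<Longrightarrow> t < R \<Longrightarrow> (G has_real_derivative G' t) (at t)"
    and lt: "filterlim G at_top (at_right L)" and rt: "filterlim (\<lambda>t. - G t) at_top (at_left R)"
  shows "\<exists>x. L < x \<and> x < R \<and> G x = 0"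
proof -
  define m where "m = (L + R) / 2"
  have m: "L < m" "m < R" using assms(1) unfolding m_def by auto
  have "eventually (\<lambda>t. 1 \<le> G t) (at_right L)" using lt by (simp add: filterlim_at_top)
  then obtain b where b: "b > L" "\<And>y. y > L \<Longrightarrow> y < b \<Longrightarrow> 1 \<le> G y"
    by (auto simp: eventually_at_right_field)
  have "eventually (\<lambda>t. 1 \<le> - G t) (at_left R)" using rt unfolding filterlim_at_top by blast
  then obtain b' where b': "b' < R" "\<And>y. y > b' \<Longrightarrow> y < R \<Longrightarrow> 1 \<le> - G y"
    by (auto simp: eventually_at_left_field)
  define t0 where "t0 = (L + min b m) / 2"
  define t1 where "t1 = (max b' m + R) / 2"
  have t0: "L < t0" "t0 < b" "t0 < m" using b m unfolding t0_def by auto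
  have t1: "t1 < R" "b' < t1" "m < t1" using b' m unfolding t1_def by auto
  have g0: "G t0 \<ge> 1" using b(2)[of t0] t0 by auto
  have g1: "G t1 \<le> -1" using b'(2)[of t1] t1 by auto
  have "continuous_on {t0..t1} G"
    using t0 t1 m by (intro continuous_at_imp_continuous_on ballI DERIV_isCont[OF D]) auto
  then obtain x where "t0 \<le> x" "x \<le> t1" "G x = 0"
    using IVT2'[of G t1 0 t0] g0 g1 t0 t1 by auto
  then show ?thesis using t0 t1 by (intro exI[of _ x]) auto
qed

lemma tq_limits:
  assumes "q > 1"
  shows "filterlim (\<lambda>t. - hq q t) at_top (at_right (theta_q q - pi))"
    "filterlim (hq q) at_top (at_left (pi - theta_q q))"
    "filterlim (\<lambda>t. - kq q t) at_top (at_right (- theta_q q))"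
    "filterlim (kq q) at_top (at_left (theta_q q))"
proof -
  note th = theta_q_props[OF assms]
  have sq: "sqrt q > 0" using assms by simp
  have s0: "sqrt q * sin (theta_q q) > 0" using th sq by simp
  have c1: "sqrt q * cos (theta_q q) = 1" using th sq by simp
  show "filterlim (\<lambda>t. - hq q t) at_top (at_right (theta_q q - pi))"
  proof -
    have e: "(\<lambda>t. - hq q t) = (\<lambda>t. (- (sqrt q * sin t)) / (sqrt q * cos t + 1))" by (auto simp: hq_def)
    have "((\<lambda>t. - (sqrt q * sin t)) \<longlongrightarrow> - (sqrt q * sin (theta_q q - pi))) (at_right (theta_q q - pi))"
      by (intro tendsto_intros)
    moreover have "- (sqrt q * sin (theta_q q - pi)) = sqrt q * sin (theta_q q)" by (simp add: sin_diff)
    moreover have "((\<lambda>t. sqrt q * cos t + 1) \<longlongrightarrow> sqrt q * cos (theta_q q - pi) + 1) (at_right (theta_q q - pi))"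
      by (intro tendsto_intros)
    moreover have "sqrt q * cos (theta_q q - pi) + 1 = 0" using c1 by (simp add: cos_diff)
    moreover have "eventually (\<lambda>t. 0 < sqrt q * cos t + 1) (at_right (theta_q q - pi))"
      unfolding eventually_at_right_field using th
      by (intro exI[of _ "pi - theta_q q"]) (auto intro!: cos_branch1[OF assms])
    ultimately show ?thesis unfolding e using s0 by (intro LIM_at_top_divide) auto
  qed
  show "filterlim (hq q) at_top (at_left (pi - theta_q q))"
  proof -
    have e: "hq q = (\<lambda>t. (sqrt q * sin t) / (sqrt q * cos t + 1))" by (auto simp: hq_def)
    have "((\<lambda>t. (sqrt q * sin t)) \<longlongrightarrow> (sqrt q * sin (pi - theta_q q))) (at_left (pi - theta_q q))"
      by (intro tendsto_intros)
    moreover have "(sqrt q * sin (pi - theta_q q)) = sqrt q * sin (theta_q q)" by simp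
    moreover have "((\<lambda>t. sqrt q * cos t + 1) \<longlongrightarrow> sqrt q * cos (pi - theta_q q) + 1) (at_left (pi - theta_q q))"
      by (intro tendsto_intros)
    moreover have "sqrt q * cos (pi - theta_q q) + 1 = 0" using c1 by simp
    moreover have "eventually (\<lambda>t. 0 < sqrt q * cos t + 1) (at_left (pi - theta_q q))"
      unfolding eventually_at_left_field using th
      by (intro exI[of _ "theta_q q - pi"]) (auto intro!: cos_branch1[OF assms])
    ultimately show ?thesis unfolding e using s0 by (intro LIM_at_top_divide) auto
  qed
  show "filterlim (\<lambda>t. - kq q t) at_top (at_right (- theta_q q))"
  proof -
    have e: "(\<lambda>t. - kq q t) = (\<lambda>t. (- (sqrt q * sin t)) / (sqrt q * cos t - 1))" by (auto simp: kq_def)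
    have "((\<lambda>t. - (sqrt q * sin t)) \<longlongrightarrow> - (sqrt q * sin (- theta_q q))) (at_right (- theta_q q))"
      by (intro tendsto_intros)
    moreover have "- (sqrt q * sin (- theta_q q)) = sqrt q * sin (theta_q q)" by simp
    moreover have "((\<lambda>t. sqrt q * cos t - 1) \<longlongrightarrow> sqrt q * cos (- theta_q q) - 1) (at_right (- theta_q q))"
      by (intro tendsto_intros)
    moreover have "sqrt q * cos (- theta_q q) - 1 = 0" using c1 by simp
    moreover have "eventually (\<lambda>t. 0 < sqrt q * cos t - 1) (at_right (- theta_q q))"
      unfolding eventually_at_right_field using th
      using cos_branch2[OF assms] by (intro exI[of _ "theta_q q"]) (force simp: abs_less_iff)
    ultimately show ?thesis unfolding e using s0 by (intro LIM_at_top_divide) auto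
  qed
  show "filterlim (kq q) at_top (at_left (theta_q q))"
  proof -
    have e: "kq q = (\<lambda>t. (sqrt q * sin t) / (sqrt q * cos t - 1))" by (auto simp: kq_def)
    have "((\<lambda>t. (sqrt q * sin t)) \<longlongrightarrow> (sqrt q * sin (theta_q q))) (at_left (theta_q q))"
      by (intro tendsto_intros)
    moreover have "((\<lambda>t. sqrt q * cos t - 1) \<longlongrightarrow> sqrt q * cos (theta_q q) - 1) (at_left (theta_q q))"
      by (intro tendsto_intros)
    moreover have "sqrt q * cos (theta_q q) - 1 = 0" using c1 by simp
    moreover have "eventually (\<lambda>t. 0 < sqrt q * cos t - 1) (at_left (theta_q q))"
      unfolding eventually_at_left_field using th
      using cos_branch2[OF assms] by (intro exI[of _ "- theta_q q"]) (force simp: abs_less_iff)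
    ultimately show ?thesis unfolding e using s0 by (intro LIM_at_top_divide) auto
  qed
qed


lemma sgn_sin: "\<bar>t\<bar> < pi \<Longrightarrow> sgn (sin t) = sgn t"
proof -
  assume a: "\<bar>t\<bar> < pi"
  consider "t > 0" | "t = 0" | "t < 0" by linarith
  then show ?thesis
  proof cases
    case 1 then show ?thesis using a sin_gt_zero[of t] by simp
  next
    case 2 then show ?thesis by simp
  next
    case 3 then have "sin (-t) > 0" using a by (intro sin_gt_zero) auto
    then show ?thesis using 3 by simp
  qed
qed

lemma hq_sign:
  assumes "q > 1" "\<bar>t\<bar> < pi - theta_q q"
  shows "sgn (hq q t) = sgn t"
proof -
  have d: "sqrt q * cos t + 1 > 0" by (rule cos_branch1[OF assms])
  have "sgn (hq q t) = sgn (sqrt q * sin t)" unfolding hq_def using d by (simp add: sgn_divide)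
  also have "\<dots> = sgn (sin t)" using assms by (simp add: sgn_mult)
  also have "\<dots> = sgn t" using assms theta_q_props[OF assms(1)] by (intro sgn_sin) auto
  finally show ?thesis .
qed

lemma kq_sign:
  assumes "q > 1" "\<bar>t\<bar> < theta_q q"
  shows "sgn (kq q t) = sgn t"
proof -
  have d: "sqrt q * cos t - 1 > 0" by (rule cos_branch2[OF assms])
  have "sgn (kq q t) = sgn (sqrt q * sin t)" unfolding kq_def using d by (simp add: sgn_divide)
  also have "\<dots> = sgn (sin t)" using assms by (simp add: sgn_mult)
  also have "\<dots> = sgn t" using assms theta_q_props[OF assms(1)] by (intro sgn_sin) auto
  finally show ?thesis .
qed

lemma hk_cmp:
  assumes "q > 1" "\<bar>t\<bar> < theta_q q"
  shows "t > 0 \<Longrightarrow> hq q t < kq q t" "t < 0 \<Longrightarrow> kq q t < hq q t"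
proof -
  note th = theta_q_props[OF assms(1)]
  have d2: "sqrt q * cos t - 1 > 0" by (rule cos_branch2[OF assms])
  have sq: "sqrt q > 0" using assms by simp
  have "sgn (sin t) = sgn t" using assms th by (intro sgn_sin) auto
  then have s: "t > 0 \<Longrightarrow> sin t > 0" "t < 0 \<Longrightarrow> sin t < 0" by (auto simp: sgn_if split: if_splits)
  show "t > 0 \<Longrightarrow> hq q t < kq q t" unfolding hq_def kq_def using d2 sq s(1)
    by (intro divide_strict_left_mono) auto
  show "t < 0 \<Longrightarrow> kq q t < hq q t" unfolding hq_def kq_def using d2 sq s(2)
    by (intro divide_strict_left_mono_neg) (auto simp: mult_pos_neg)
qed

lemma core:
  fixes F F' :: "real \<Rightarrow> real" and q a :: real
  assumes q: "q > 1"
    and FD: "\<And>t. (F has_real_derivative F' t) (at t)"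
    and FB: "\<And>t. F' t < sqrt q / (1 + sqrt q)"
  obtains x y where "\<bar>x\<bar> < pi - theta_q q" "F (a + x) = hq q x"
    "\<And>x'. \<bar>x'\<bar> < pi - theta_q q \<Longrightarrow> F (a + x') = hq q x' \<Longrightarrow> x' = x"
    "\<bar>y\<bar> < theta_q q" "F (a + y) = kq q y"
    "\<And>y'. \<bar>y'\<bar> < theta_q q \<Longrightarrow> F (a + y') = kq q y' \<Longrightarrow> y' = y"
    "sgn x = sgn (F a)" "sgn y = sgn (F a)"
    "F a > 0 \<Longrightarrow> y < x \<and> (\<forall>t. y \<le> t \<and> t \<le> x \<longrightarrow> F (a + t) > 0)"
    "F a < 0 \<Longrightarrow> x < y \<and> (\<forall>t. x \<le> t \<and> t \<le> y \<longrightarrow> F (a + t) < 0)"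
proof -
  note th = theta_q_props[OF q]
  define L1 where "L1 = theta_q q - pi"
  define R1 where "R1 = pi - theta_q q"
  define L2 where "L2 = - theta_q q"
  define R2 where "R2 = theta_q q"
  define G1 where "G1 t = F (a + t) - hq q t" for t
  define G2 where "G2 t = F (a + t) - kq q t" for t
  define G1' where "G1' t = F' (a + t) - sqrt q * (sqrt q + cos t) / (sqrt q * cos t + 1)^2" for t
  define G2' where "G2' t = F' (a + t) - sqrt q * (sqrt q - cos t) / (sqrt q * cos t - 1)^2" for t
  have Fs: "((\<lambda>t. F (a + t)) has_real_derivative F' (a + t)) (at t)" for t
  proof -
    have "((\<lambda>t. F (a + t)) has_real_derivative F' (a + t) * 1) (at t)"
      by (rule DERIV_chain2[where f=F and g="\<lambda>t. a+t"]) (auto intro!: FD derivative_eq_intros)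
    then show ?thesis by simp
  qed
  have Fc: "isCont (\<lambda>t. F (a + t)) t" for t using Fs by (rule DERIV_isCont)
  have in1: "\<bar>t\<bar> < pi - theta_q q" if "L1 < t" "t < R1" for t using that unfolding L1_def R1_def by auto
  have in2: "\<bar>t\<bar> < theta_q q" if "L2 < t" "t < R2" for t using that unfolding L2_def R2_def by auto
  have D1: "(G1 has_real_derivative G1' t) (at t)" if "L1 < t" "t < R1" for t
  proof -
    have "sqrt q * cos t + 1 > 0" using cos_branch1[OF q in1[OF that]] .
    then show ?thesis unfolding G1_def[abs_def] G1'_def
      by (intro DERIV_diff Fs hq_deriv) auto
  qed
  have N1: "G1' t < 0" if "L1 < t" "t < R1" for t
  proof -
    have "sqrt q * cos t + 1 > 0" using cos_branch1[OF q in1[OF that]] .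
    from hq_bound[OF q this] FB[of "a + t"] show ?thesis unfolding G1'_def by linarith
  qed
  have D2: "(G2 has_real_derivative G2' t) (at t)" if "L2 < t" "t < R2" for t
  proof -
    have "sqrt q * cos t - 1 > 0" using cos_branch2[OF q in2[OF that]] .
    then show ?thesis unfolding G2_def[abs_def] G2'_def
      by (intro DERIV_diff Fs kq_deriv) auto
  qed
  have N2: "G2' t < 0" if "L2 < t" "t < R2" for t
  proof -
    have "sqrt q * cos t - 1 > 0" using cos_branch2[OF q in2[OF that]] .
    from kq_bound[OF q this] FB[of "a + t"] show ?thesis unfolding G2'_def by linarith
  qed
  note lim = tq_limits[OF q]
  have l1: "filterlim G1 at_top (at_right L1)"
  proof -
    have "((\<lambda>t. F (a + t)) \<longlongrightarrow> F (a + L1)) (at_right L1)"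
      using Fc[of L1] by (simp add: isCont_def filterlim_at_split)
    from filterlim_tendsto_add_at_top[OF this lim(1)[folded L1_def]]
    show ?thesis unfolding G1_def by simp
  qed
  have r1: "filterlim (\<lambda>t. - G1 t) at_top (at_left R1)"
  proof -
    have "((\<lambda>t. - F (a + t)) \<longlongrightarrow> - F (a + R1)) (at_left R1)"
      using Fc[of R1] by (intro tendsto_intros) (simp add: isCont_def filterlim_at_split)
    from filterlim_tendsto_add_at_top[OF this lim(2)[folded R1_def]]
    show ?thesis unfolding G1_def by simp
  qed
  have l2: "filterlim G2 at_top (at_right L2)"
  proof -
    have "((\<lambda>t. F (a + t)) \<longlongrightarrow> F (a + L2)) (at_right L2)"
      using Fc[of L2] by (simp add: isCont_def filterlim_at_split)
    from filterlim_tendsto_add_at_top[OF this lim(3)[folded L2_def]]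
    show ?thesis unfolding G2_def by simp
  qed
  have r2: "filterlim (\<lambda>t. - G2 t) at_top (at_left R2)"
  proof -
    have "((\<lambda>t. - F (a + t)) \<longlongrightarrow> - F (a + R2)) (at_left R2)"
      using Fc[of R2] by (intro tendsto_intros) (simp add: isCont_def filterlim_at_split)
    from filterlim_tendsto_add_at_top[OF this lim(4)[folded R2_def]]
    show ?thesis unfolding G2_def by simp
  qed
  have LR1: "L1 < R1" and LR2: "L2 < R2" using th unfolding L1_def R1_def L2_def R2_def by auto
  obtain x where x: "L1 < x" "x < R1" "G1 x = 0" using root_exists[OF LR1 D1 l1 r1] by blast
  obtain y where y: "L2 < y" "y < R2" "G2 y = 0" using root_exists[OF LR2 D2 l2 r2] by blast
  have dec1: "G1 v < G1 u" if "L1 < u" "u < v" "v < R1" for u v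
    using root_decr[of L1 R1 G1 G1', OF D1 N1] that by blast
  have dec2: "G2 v < G2 u" if "L2 < u" "u < v" "v < R2" for u v
    using root_decr[of L2 R2 G2 G2', OF D2 N2] that by blast
  have abs1: "\<bar>t\<bar> < pi - theta_q q \<longleftrightarrow> L1 < t \<and> t < R1" for t unfolding L1_def R1_def by auto
  have abs2: "\<bar>t\<bar> < theta_q q \<longleftrightarrow> L2 < t \<and> t < R2" for t unfolding L2_def R2_def by auto
  have ux: "x' = x" if "\<bar>x'\<bar> < pi - theta_q q" "F (a + x') = hq q x'" for x'
  proof (rule ccontr)
    assume "x' \<noteq> x"
    then consider "x' < x" | "x < x'" by linarith
    then show False using dec1[of x' x] dec1[of x x'] that x unfolding abs1 G1_def by cases auto
  qed
  have uy: "y' = y" if "\<bar>y'\<bar> < theta_q q" "F (a + y') = kq q y'" for y'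
  proof (rule ccontr)
    assume "y' \<noteq> y"
    then consider "y' < y" | "y < y'" by linarith
    then show False using dec2[of y' y] dec2[of y y'] that y unfolding abs2 G2_def by cases auto
  qed
  have h0: "hq q 0 = 0" "kq q 0 = 0" by (auto simp: hq_def kq_def)
  have L0: "L1 < 0" "0 < R1" "L2 < 0" "0 < R2" using th unfolding L1_def R1_def L2_def R2_def by auto
  have G0: "G1 0 = F a" "G2 0 = F a" unfolding G1_def G2_def using h0 by auto
  have sx: "sgn x = sgn (F a)" and sy: "sgn y = sgn (F a)"
  proof -
    consider "F a > 0" | "F a = 0" | "F a < 0" by linarith
    then have "sgn x = sgn (F a) \<and> sgn y = sgn (F a)"
    proof cases
      case 1
      have "x > 0"
      proof (rule ccontr)
        assume "\<not> x > 0"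
        then consider "x = 0" | "x < 0" by linarith
        then show False using dec1[of x 0] x L0 G0 1 by cases auto
      qed
      moreover have "y > 0"
      proof (rule ccontr)
        assume "\<not> y > 0"
        then consider "y = 0" | "y < 0" by linarith
        then show False using dec2[of y 0] y L0 G0 1 by cases auto
      qed
      ultimately show ?thesis using 1 by simp
    next
      case 2
      have "x = 0" using ux[of 0] th 2 h0 by auto
      moreover have "y = 0" using uy[of 0] th 2 h0 by auto
      ultimately show ?thesis using 2 by simp
    next
      case 3
      have "x < 0"
      proof (rule ccontr)
        assume "\<not> x < 0"
        then consider "x = 0" | "x > 0" by linarith
        then show False using dec1[of 0 x] x L0 G0 3 by cases auto
      qed
      moreover have "y < 0"
      proof (rule ccontr)
        assume "\<not> y < 0"
        then consider "y = 0" | "y > 0" by linarith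
        then show False using dec2[of 0 y] y L0 G0 3 by cases auto
      qed
      ultimately show ?thesis using 3 by simp
    qed
    then show "sgn x = sgn (F a)" "sgn y = sgn (F a)" by auto
  qed
  have xin: "\<bar>x\<bar> < pi - theta_q q" using x abs1 by auto
  have yin: "\<bar>y\<bar> < theta_q q" using y abs2 by auto
  have Fx: "F (a + x) = hq q x" using x unfolding G1_def by simp
  have Fy: "F (a + y) = kq q y" using y unfolding G2_def by simp
  have pos: "y < x \<and> (\<forall>t. y \<le> t \<and> t \<le> x \<longrightarrow> F (a + t) > 0)" if "F a > 0"
  proof -
    have xp: "x > 0" and yp: "y > 0" using sx sy that by (auto simp: sgn_if split: if_splits)
    have yx: "y < x"
    proof (rule ccontr)
      assume "\<not> y < x"
      then have xy: "x \<le> y" by simp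
      then have x2: "\<bar>x\<bar> < theta_q q" using yin xp yp by auto
      have hk: "hq q x < kq q x" using hk_cmp(1)[OF q x2] xp by simp
      show False
      proof (cases "x = y")
        case True then show False using Fx Fy hk by simp
      next
        case False
        then have "G2 y < G2 x" using dec2[of x y] xy x2 yin xp unfolding abs2 by auto
        then show False using y Fx hk unfolding G2_def by simp
      qed
    qed
    have "F (a + t) > 0" if "y \<le> t" "t \<le> x" for t
    proof -
      have t: "\<bar>t\<bar> < pi - theta_q q" "t > 0" using that xin yp by auto
      have hp: "hq q t > 0" using hq_sign[OF q t(1)] t(2) by (auto simp: sgn_if split: if_splits)
      show ?thesis
      proof (cases "t = x")
        case True then show ?thesis using Fx hp by simp
      next
        case False
        then have "G1 x < G1 t" using dec1[of t x] that t x unfolding abs1 by auto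
        then show ?thesis using x hp unfolding G1_def by simp
      qed
    qed
    then show ?thesis using yx by auto
  qed
  have neg: "x < y \<and> (\<forall>t. x \<le> t \<and> t \<le> y \<longrightarrow> F (a + t) < 0)" if "F a < 0"
  proof -
    have xp: "x < 0" and yp: "y < 0" using sx sy that by (auto simp: sgn_if split: if_splits)
    have yx: "x < y"
    proof (rule ccontr)
      assume "\<not> x < y"
      then have xy: "y \<le> x" by simp
      then have x2: "\<bar>x\<bar> < theta_q q" using yin xp yp by auto
      have hk: "kq q x < hq q x" using hk_cmp(2)[OF q x2] xp by simp
      show False
      proof (cases "x = y")
        case True then show False using Fx Fy hk by simp
      next
        case False
        then have "G2 x < G2 y" using dec2[of y x] xy x2 yin xp unfolding abs2 by auto
        then show False using y Fx hk unfolding G2_def by simp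
      qed
    qed
    have "F (a + t) < 0" if "x \<le> t" "t \<le> y" for t
    proof -
      have t: "\<bar>t\<bar> < pi - theta_q q" "t < 0" using that xin yp by auto
      have hp: "hq q t < 0" using hq_sign[OF q t(1)] t(2) by (auto simp: sgn_if split: if_splits)
      show ?thesis
      proof (cases "t = x")
        case True then show ?thesis using Fx hp by simp
      next
        case False
        then have "G1 t < G1 x" using dec1[of x t] that t x unfolding abs1 by auto
        then show ?thesis using x hp unfolding G1_def by simp
      qed
    qed
    then show ?thesis using yx by auto
  qed
  show ?thesis
    by (rule that[OF xin Fx ux yin Fy uy sx sy pos neg])
qed


lemma hq_per: "hq q (t + 2 * pi * of_int k) = hq q t"
  by (rule periodic_int) (simp add: hq_def)

lemma hq_pi: "hq q (t - pi) = kq q t" "hq q (t + pi) = kq q t"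
  by (auto simp: hq_def kq_def sin_diff cos_diff divide_simps) (auto simp: algebra_simps)

lemma Tmap1:
  fixes \<rho> :: "real \<Rightarrow> real"
  defines "F \<equiv> deriv (\<lambda>t. ln (\<rho> t))"
  assumes q: "q > 1"
    and Fper: "\<And>t k. F (t + 2 * pi * of_int k) = F t"
    and a: "a = Arg ((-1) ^ (l - 1) * \<eta>)"
    and x: "\<bar>x\<bar> < pi - theta_q q" "F (a + x) = hq q x"
    and ux: "\<And>x'. \<bar>x'\<bar> < pi - theta_q q \<Longrightarrow> F (a + x') = hq q x' \<Longrightarrow> x' = x"
  shows "Tmap \<rho> q 1 l \<eta> = wrap (a + x)"
proof -
  note th = theta_q_props[OF q]
  have "(THE \<theta>. \<theta> \<in> {-pi<..pi} \<and> F \<theta> = hq q (\<theta> - a) \<and> wrap (\<theta> - a) \<in> {theta_q q - pi <..< pi - theta_q q})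
        = wrap (a + x)"
  proof (rule the_equality)
    obtain k :: int where k: "a + x = wrap (a + x) + 2 * pi * of_int k" using wrap_props(2) by blast
    have w: "wrap (a + x) \<in> {-pi<..pi}" using wrap_props(1) .
    have "F (wrap (a + x)) = F (a + x)" using Fper[of "wrap (a + x)" k] k by simp
    moreover have "hq q (wrap (a + x) - a) = hq q x"
    proof -
      have "wrap (a + x) - a = x + 2 * pi * of_int (-k)" using k by (simp add: algebra_simps)
      then show ?thesis by (simp only: hq_per)
    qed
    moreover have "wrap (wrap (a + x) - a) = x"
      using x(1) th k by (intro wrap_unique[where k="-k"]) (auto simp: algebra_simps)
    ultimately show "wrap (a + x) \<in> {-pi<..pi} \<and> F (wrap (a + x)) = hq q (wrap (a + x) - a) \<and>
        wrap (wrap (a + x) - a) \<in> {theta_q q - pi <..< pi - theta_q q}"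
      using w x by auto
  next
    fix \<theta>
    assume h: "\<theta> \<in> {-pi<..pi} \<and> F \<theta> = hq q (\<theta> - a) \<and> wrap (\<theta> - a) \<in> {theta_q q - pi <..< pi - theta_q q}"
    define x' where "x' = wrap (\<theta> - a)"
    obtain j :: int where j: "\<theta> - a = x' + 2 * pi * of_int j" using wrap_props(2) unfolding x'_def by blast
    have x'1: "\<bar>x'\<bar> < pi - theta_q q" using h unfolding x'_def by auto
    have "F (a + x') = F \<theta>" using Fper[of "a + x'" j] j by (simp add: algebra_simps)
    also have "\<dots> = hq q (\<theta> - a)" using h by simp
    also have "\<dots> = hq q x'" using j hq_per by simp
    finally have "x' = x" using ux x'1 by blast
    then show "\<theta> = wrap (a + x)"
      using h j by (intro wrap_unique[where k="-j", symmetric]) (auto simp: algebra_simps)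
  qed
  then show ?thesis unfolding Tmap_def Let_def F_def a by simp
qed

lemma Tmap2:
  fixes \<rho> :: "real \<Rightarrow> real"
  defines "F \<equiv> deriv (\<lambda>t. ln (\<rho> t))"
  assumes q: "q > 1"
    and Fper: "\<And>t k. F (t + 2 * pi * of_int k) = F t"
    and a': "a' = Arg ((-1) ^ (l - 1) * \<eta>)"
    and m: "a' = a + pi + 2 * pi * of_int m"
    and y: "\<bar>y\<bar> < theta_q q" "F (a + y) = kq q y"
    and uy: "\<And>y'. \<bar>y'\<bar> < theta_q q \<Longrightarrow> F (a + y') = kq q y' \<Longrightarrow> y' = y"
  shows "Tmap \<rho> q 2 l \<eta> = wrap (a + y)"
proof -
  note th = theta_q_props[OF q]
  have "(THE \<theta>. \<theta> \<in> {-pi<..pi} \<and> F \<theta> = hq q (\<theta> - a') \<and> pi - theta_q q < \<bar>wrap (\<theta> - a')\<bar>)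
        = wrap (a + y)"
  proof (rule the_equality)
    obtain k :: int where k: "a + y = wrap (a + y) + 2 * pi * of_int k" using wrap_props(2) by blast
    have w: "wrap (a + y) \<in> {-pi<..pi}" using wrap_props(1) .
    have e: "wrap (a + y) - a' = (y - pi) + 2 * pi * of_int (- k - m)" using k m by (simp add: algebra_simps)
    have "F (wrap (a + y)) = F (a + y)" using Fper[of "wrap (a + y)" k] k by simp
    moreover have "hq q (wrap (a + y) - a') = kq q y"
      unfolding e hq_per hq_pi ..
    moreover have "pi - theta_q q < \<bar>wrap (wrap (a + y) - a')\<bar>"
    proof (cases "y > 0")
      case True
      have "wrap (wrap (a + y) - a') = y - pi" using e True y th by (intro wrap_unique[where k="-k-m"]) auto
      then show ?thesis using True y by auto
    next
      case False
      have "wrap (wrap (a + y) - a') = y + pi" using e False y th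
        by (intro wrap_unique[where k="- k - m - 1"]) (auto simp: algebra_simps)
      then show ?thesis using False y by auto
    qed
    ultimately show "wrap (a + y) \<in> {-pi<..pi} \<and> F (wrap (a + y)) = hq q (wrap (a + y) - a') \<and>
        pi - theta_q q < \<bar>wrap (wrap (a + y) - a')\<bar>"
      using w y by auto
  next
    fix \<theta>
    assume h: "\<theta> \<in> {-pi<..pi} \<and> F \<theta> = hq q (\<theta> - a') \<and> pi - theta_q q < \<bar>wrap (\<theta> - a')\<bar>"
    define z where "z = wrap (\<theta> - a')"
    obtain j :: int where j: "\<theta> - a' = z + 2 * pi * of_int j" using wrap_props(2) unfolding z_def by blast
    have z: "z \<in> {-pi<..pi}" "pi - theta_q q < \<bar>z\<bar>" using h wrap_props(1) unfolding z_def by auto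
    define y' where "y' = (if z > 0 then z - pi else z + pi)"
    have y'1: "\<bar>y'\<bar> < theta_q q" using z unfolding y'_def by auto
    obtain n :: int where n: "\<theta> = a + y' + 2 * pi * of_int n"
    proof (cases "z > 0")
      case True
      show ?thesis using j m True by (intro that[of "j + m + 1"]) (auto simp: y'_def algebra_simps)
    next
      case False
      show ?thesis using j m False by (intro that[of "j + m"]) (auto simp: y'_def algebra_simps)
    qed
    have hz: "hq q z = kq q y'"
      by (cases "z > 0") (auto simp: y'_def hq_pi(2)[of q "z - pi", symmetric] hq_pi(1)[of q "z + pi", symmetric])
    have "F (a + y') = F \<theta>" using Fper[of "a + y'" n] n by simp
    also have "\<dots> = hq q (\<theta> - a')" using h by simp
    also have "\<dots> = hq q z" using j hq_per by simp
    finally have "y' = y" using uy y'1 hz by simp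
    then show "\<theta> = wrap (a + y)"
      using h n by (intro wrap_unique[where k="-n", symmetric]) (auto simp: algebra_simps)
  qed
  then show ?thesis unfolding Tmap_def Let_def F_def a' by simp
qed


lemma sin_int: "sin (u + 2 * pi * of_int k) = sin u"
  by (rule periodic_int) simp

lemma abs_sin_mono:
  assumes "0 < \<bar>y\<bar>" "\<bar>y\<bar> < \<bar>x\<bar>" "\<bar>x\<bar> + \<bar>y\<bar> < pi"
  shows "\<bar>sin y\<bar> < \<bar>sin x\<bar>"
proof -
  have as: "\<bar>sin t\<bar> = sin \<bar>t\<bar>" if "\<bar>t\<bar> \<le> pi" for t
  proof (cases "t \<ge> 0")
    case True then show ?thesis using that sin_ge_zero[of t] by auto
  next
    case False then show ?thesis using that sin_ge_zero[of "-t"] by auto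
  qed
  have "sin \<bar>y\<bar> < sin \<bar>x\<bar>"
  proof (cases "\<bar>x\<bar> \<le> pi/2")
    case True then show ?thesis using assms by (subst sin_mono_less_eq) auto
  next
    case False
    have "sin \<bar>y\<bar> < sin (pi - \<bar>x\<bar>)" using assms False by (subst sin_mono_less_eq) auto
    then show ?thesis by simp
  qed
  then show ?thesis using as assms by simp
qed

theorem lemma6:
  fixes \<rho> :: "real \<Rightarrow> real" and q :: real
  assumes q: "q > 1"
    and pos: "\<And>t. \<rho> t > 0"
    and per: "\<And>t. \<rho> (t + 2 * pi) = \<rho> t"
    and C2: "C2 \<rho>"
    and curv: "\<And>t. deriv (deriv (\<lambda>s. ln (\<rho> s))) t < sqrt q / (1 + sqrt q)"
  shows
    "(\<forall>\<eta> l. cmod \<eta> = 1 \<longrightarrow> l \<in> {1, 2::nat} \<longrightarrow>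
        (let T1 = Tmap \<rho> q 1 l \<eta>; T2 = Tmap \<rho> q 2 (3 - l) \<eta>; s = (-1::real) ^ (l - 1) in
          sgn (deriv \<rho> T1) = s * sgn (sin (T1 - Arg \<eta>)) \<and>
          s * sgn (sin (T1 - Arg \<eta>)) = s * sgn (sin (T2 - Arg \<eta>)) \<and>
          s * sgn (sin (T2 - Arg \<eta>)) = sgn (deriv \<rho> T2)))
   \<and> (\<forall>\<eta> l. cmod \<eta> = 1 \<longrightarrow> l \<in> {1, 2::nat} \<longrightarrow>
        deriv \<rho> (Arg ((-1) ^ (l - 1) * \<eta>)) \<noteq> 0 \<longrightarrow>
        (let a = Arg ((-1) ^ (l - 1) * \<eta>); T1 = Tmap \<rho> q 1 l \<eta>; T2 = Tmap \<rho> q 2 (3 - l) \<eta> in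
          0 < \<bar>wrap (T2 - a)\<bar> \<and> \<bar>wrap (T2 - a)\<bar> < \<bar>wrap (T1 - a)\<bar> \<and>
          \<bar>wrap (T1 - a)\<bar> < pi - theta_q q \<and>
          \<rho> T2 < \<rho> T1 \<and>
          0 < \<bar>sin (T2 - Arg \<eta>)\<bar> \<and> \<bar>sin (T2 - Arg \<eta>)\<bar> < \<bar>sin (T1 - Arg \<eta>)\<bar>))"
proof -
  define F where "F = deriv (\<lambda>t. ln (\<rho> t))"
  note th = theta_q_props[OF q]
  have \<rho>d: "(\<rho> has_real_derivative deriv \<rho> t) (at t)" for t
    using C2 unfolding C2_def by (simp add: DERIV_deriv_iff_real_differentiable)
  have \<rho>d2: "(deriv \<rho> has_real_derivative deriv (deriv \<rho>) t) (at t)" for t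
    using C2 unfolding C2_def by (simp add: DERIV_deriv_iff_real_differentiable)
  have Feq: "F t = deriv \<rho> t / \<rho> t" for t
  proof -
    have "((\<lambda>t. ln (\<rho> t)) has_real_derivative (1 / \<rho> t) * deriv \<rho> t) (at t)"
      by (rule DERIV_chain2[where f=ln]) (auto intro: DERIV_ln_divide pos \<rho>d)
    then show ?thesis unfolding F_def by (intro DERIV_imp_deriv) simp
  qed
  then have Ffun: "F = (\<lambda>t. deriv \<rho> t / \<rho> t)" by auto
  have FD: "(F has_real_derivative deriv F t) (at t)" for t
  proof -
    have "(F has_real_derivative ((deriv (deriv \<rho>) t * \<rho> t - deriv \<rho> t * deriv \<rho> t) / (\<rho> t * \<rho> t))) (at t)"
      unfolding Ffun using pos[of t] by (intro DERIV_divide \<rho>d \<rho>d2) auto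
    moreover from DERIV_imp_deriv[OF this] have "deriv F t = (deriv (deriv \<rho>) t * \<rho> t - deriv \<rho> t * deriv \<rho> t) / (\<rho> t * \<rho> t)" .
    ultimately show ?thesis by simp
  qed
  have FB: "deriv F t < sqrt q / (1 + sqrt q)" for t using curv unfolding F_def .
  have d\<rho>per: "deriv \<rho> (t + 2 * pi) = deriv \<rho> t" for t
  proof -
    have "((\<lambda>x. \<rho> (x + 2 * pi)) has_real_derivative deriv \<rho> (t + 2 * pi)) (at t)"
      using \<rho>d[of "t + 2 * pi"] by (simp add: DERIV_shift)
    then have "(\<rho> has_real_derivative deriv \<rho> (t + 2 * pi)) (at t)" using per by simp
    then show ?thesis using \<rho>d[of t] by (rule DERIV_unique)
  qed
  have \<rho>int: "\<rho> (t + 2 * pi * of_int k) = \<rho> t" for t k by (rule periodic_int) (rule per)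
  have Fint: "F (t + 2 * pi * of_int k) = F t" for t k
    by (rule periodic_int) (simp add: Feq per d\<rho>per)
  have d\<rho>: "deriv \<rho> t = \<rho> t * F t" for t using pos[of t] by (simp add: Feq)
  have main: "(let T1 = Tmap \<rho> q 1 l \<eta>; T2 = Tmap \<rho> q 2 (3 - l) \<eta>; s = (-1::real) ^ (l - 1) in
          sgn (deriv \<rho> T1) = s * sgn (sin (T1 - Arg \<eta>)) \<and>
          s * sgn (sin (T1 - Arg \<eta>)) = s * sgn (sin (T2 - Arg \<eta>)) \<and>
          s * sgn (sin (T2 - Arg \<eta>)) = sgn (deriv \<rho> T2))
        \<and> (deriv \<rho> (Arg ((-1) ^ (l - 1) * \<eta>)) \<noteq> 0 \<longrightarrow>
        (let a = Arg ((-1) ^ (l - 1) * \<eta>); T1 = Tmap \<rho> q 1 l \<eta>; T2 = Tmap \<rho> q 2 (3 - l) \<eta> in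
          0 < \<bar>wrap (T2 - a)\<bar> \<and> \<bar>wrap (T2 - a)\<bar> < \<bar>wrap (T1 - a)\<bar> \<and>
          \<bar>wrap (T1 - a)\<bar> < pi - theta_q q \<and>
          \<rho> T2 < \<rho> T1 \<and>
          0 < \<bar>sin (T2 - Arg \<eta>)\<bar> \<and> \<bar>sin (T2 - Arg \<eta>)\<bar> < \<bar>sin (T1 - Arg \<eta>)\<bar>))"
    if \<eta>: "cmod \<eta> = 1" and l: "l \<in> {1, 2::nat}" for \<eta> l
  proof -
    have \<eta>0: "\<eta> \<noteq> 0" using \<eta> by auto
    define a where "a = Arg ((-1) ^ (l - 1) * \<eta>)"
    define a' where "a' = Arg ((-1) ^ (3 - l - 1) * \<eta>)"
    define s where "s = ((-1::real) ^ (l - 1))"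
    obtain m m2 :: int where m: "a' = a + pi + 2 * pi * of_int m"
      and m2: "Arg \<eta> = a + (if l = 1 then 0 else pi) + 2 * pi * of_int m2"
    proof (cases "l = 1")
      case True
      then have "a = Arg \<eta>" "a' = Arg (- \<eta>)" unfolding a_def a'_def by auto
      show ?thesis
      proof (cases "Arg \<eta> \<le> 0")
        case c: True
        show ?thesis using Arg_minus[OF \<eta>0] True c \<open>a = Arg \<eta>\<close> \<open>a' = Arg (- \<eta>)\<close> by (intro that[of 0 0]) auto
      next
        case c: False
        show ?thesis using Arg_minus[OF \<eta>0] True c \<open>a = Arg \<eta>\<close> \<open>a' = Arg (- \<eta>)\<close> by (intro that[of "-1" 0]) auto
      qed
    next
      case False
      then have l2: "l = 2" using l by auto
      then have "a = Arg (- \<eta>)" "a' = Arg \<eta>" unfolding a_def a'_def by auto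
      show ?thesis
      proof (cases "Arg \<eta> \<le> 0")
        case c: True
        show ?thesis using Arg_minus[OF \<eta>0] l2 c \<open>a = Arg (- \<eta>)\<close> \<open>a' = Arg \<eta>\<close> by (intro that[of "-1" "-1"]) auto
      next
        case c: False
        show ?thesis using Arg_minus[OF \<eta>0] l2 c \<open>a = Arg (- \<eta>)\<close> \<open>a' = Arg \<eta>\<close> by (intro that[of 0 0]) auto
      qed
    qed
    have s: "s = (if l = 1 then 1 else -1)" using l unfolding s_def by auto
    have sinA: "sin (T - Arg \<eta>) = s * sin (T - a)" for T
    proof -
      have "sin (T - Arg \<eta>) = sin ((T - a - (if l = 1 then 0 else pi)) + 2 * pi * of_int (- m2))"
        using m2 by (simp add: algebra_simps)
      also have "\<dots> = sin (T - a - (if l = 1 then 0 else pi))" by (rule sin_int)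
      also have "\<dots> = s * sin (T - a)" using s by (simp add: sin_diff)
      finally show ?thesis .
    qed
    obtain x y where xy: "\<bar>x\<bar> < pi - theta_q q" "F (a + x) = hq q x"
      "\<And>x'. \<bar>x'\<bar> < pi - theta_q q \<Longrightarrow> F (a + x') = hq q x' \<Longrightarrow> x' = x"
      "\<bar>y\<bar> < theta_q q" "F (a + y) = kq q y"
      "\<And>y'. \<bar>y'\<bar> < theta_q q \<Longrightarrow> F (a + y') = kq q y' \<Longrightarrow> y' = y"
      "sgn x = sgn (F a)" "sgn y = sgn (F a)"
      "F a > 0 \<Longrightarrow> y < x \<and> (\<forall>t. y \<le> t \<and> t \<le> x \<longrightarrow> F (a + t) > 0)"
      "F a < 0 \<Longrightarrow> x < y \<and> (\<forall>t. x \<le> t \<and> t \<le> y \<longrightarrow> F (a + t) < 0)"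
      using core[OF q FD FB, of a] by blast
    define T1 where "T1 = Tmap \<rho> q 1 l \<eta>"
    define T2 where "T2 = Tmap \<rho> q 2 (3 - l) \<eta>"
    have T1: "T1 = wrap (a + x)" unfolding T1_def
      by (rule Tmap1[OF q Fint[unfolded F_def] a_def xy(1,2,3)[unfolded F_def]]) auto
    have T2: "T2 = wrap (a + y)" unfolding T2_def
      by (rule Tmap2[OF q Fint[unfolded F_def] a'_def m xy(4,5,6)[unfolded F_def]]) auto
    obtain k :: int where k: "a + x = T1 + 2 * pi * of_int k" using wrap_props(2) T1 by blast
    obtain k' :: int where k': "a + y = T2 + 2 * pi * of_int k'" using wrap_props(2) T2 by blast
    have T1e: "T1 = (a + x) + 2 * pi * of_int (-k)" using k by simp
    have T2e: "T2 = (a + y) + 2 * pi * of_int (-k')" using k' by simp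
    have FT1: "F T1 = F (a + x)" and FT2: "F T2 = F (a + y)" unfolding T1e T2e Fint by auto
    have rT1: "\<rho> T1 = \<rho> (a + x)" and rT2: "\<rho> T2 = \<rho> (a + y)" unfolding T1e T2e \<rho>int by auto
    have sT1: "sin (T1 - a) = sin x"
    proof -
      have "T1 - a = x + 2 * pi * of_int (-k)" using T1e by simp
      then show ?thesis by (simp only: sin_int)
    qed
    have sT2: "sin (T2 - a) = sin y"
    proof -
      have "T2 - a = y + 2 * pi * of_int (-k')" using T2e by simp
      then show ?thesis by (simp only: sin_int)
    qed
    have xpi: "\<bar>x\<bar> < pi" "\<bar>y\<bar> < pi" using xy(1,4) th by auto
    have wT1: "wrap (T1 - a) = x" using T1e xpi by (intro wrap_unique[where k="-k"]) auto
    have wT2: "wrap (T2 - a) = y" using T2e xpi by (intro wrap_unique[where k="-k'"]) auto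
    have sx: "sgn (sin x) = sgn x" and sy: "sgn (sin y) = sgn y" using xpi by (auto intro: sgn_sin)
    have ss: "s * s = 1" using s by auto
    have sgnT1: "sgn (deriv \<rho> T1) = sgn x"
      using hq_sign[OF q xy(1)] pos[of T1] by (simp add: d\<rho> sgn_mult FT1 xy(2))
    have sgnT2: "sgn (deriv \<rho> T2) = sgn y"
      using kq_sign[OF q xy(4)] pos[of T2] by (simp add: d\<rho> sgn_mult FT2 xy(5))
    have ssin: "s * sgn (s * u) = sgn u" for u using s by (auto simp: sgn_mult)
    have part1: "sgn (deriv \<rho> T1) = s * sgn (sin (T1 - Arg \<eta>)) \<and>
          s * sgn (sin (T1 - Arg \<eta>)) = s * sgn (sin (T2 - Arg \<eta>)) \<and>
          s * sgn (sin (T2 - Arg \<eta>)) = sgn (deriv \<rho> T2)"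
      unfolding sinA sT1 sT2 ssin sx sy sgnT1 sgnT2 using xy(7,8) by simp
    have part2: "0 < \<bar>wrap (T2 - a)\<bar> \<and> \<bar>wrap (T2 - a)\<bar> < \<bar>wrap (T1 - a)\<bar> \<and>
          \<bar>wrap (T1 - a)\<bar> < pi - theta_q q \<and>
          \<rho> T2 < \<rho> T1 \<and>
          0 < \<bar>sin (T2 - Arg \<eta>)\<bar> \<and> \<bar>sin (T2 - Arg \<eta>)\<bar> < \<bar>sin (T1 - Arg \<eta>)\<bar>"
      if nz: "deriv \<rho> a \<noteq> 0"
    proof -
      have Fa: "F a \<noteq> 0" using nz d\<rho>[of a] by auto
      have yx: "0 < \<bar>y\<bar> \<and> \<bar>y\<bar> < \<bar>x\<bar> \<and> \<rho> (a + y) < \<rho> (a + x)"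
      proof (cases "F a > 0")
        case True
        from xy(9)[OF True] have yx: "y < x" and Fp: "\<And>t. y \<le> t \<Longrightarrow> t \<le> x \<Longrightarrow> F (a + t) > 0" by auto
        have yp: "y > 0" using xy(8) True by (auto simp: sgn_if split: if_splits)
        have "\<rho> (a + y) < \<rho> (a + x)"
        proof (rule DERIV_pos_imp_increasing[of "a + y" "a + x" \<rho>])
          show "a + y < a + x" using yx by simp
          fix u assume "a + y \<le> u" "u \<le> a + x"
          then have "F (a + (u - a)) > 0" using Fp[of "u - a"] by simp
          then show "\<exists>d. (\<rho> has_real_derivative d) (at u) \<and> 0 < d"
            using \<rho>d[of u] pos[of u] by (intro exI[of _ "deriv \<rho> u"]) (auto simp: d\<rho>)
        qed
        then show ?thesis using yx yp by auto
      next
        case False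
        then have Fn: "F a < 0" using Fa by simp
        from xy(10)[OF Fn] have yx: "x < y" and Fp: "\<And>t. x \<le> t \<Longrightarrow> t \<le> y \<Longrightarrow> F (a + t) < 0" by auto
        have yp: "y < 0" using xy(8) Fn by (auto simp: sgn_if split: if_splits)
        have "\<rho> (a + y) < \<rho> (a + x)"
        proof (rule DERIV_neg_imp_decreasing[of "a + x" "a + y" \<rho>])
          show "a + x < a + y" using yx by simp
          fix u assume "a + x \<le> u" "u \<le> a + y"
          then have "F (a + (u - a)) < 0" using Fp[of "u - a"] by simp
          then show "\<exists>d. (\<rho> has_real_derivative d) (at u) \<and> d < 0"
            using \<rho>d[of u] pos[of u] by (intro exI[of _ "deriv \<rho> u"]) (auto simp: d\<rho> mult_pos_neg)
        qed
        then show ?thesis using yx yp by auto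
      qed
      have "\<bar>sin y\<bar> < \<bar>sin x\<bar>" using yx xy(1,4) by (intro abs_sin_mono) auto
      moreover have "0 < \<bar>sin y\<bar>" using sy yx by (auto simp: sgn_if split: if_splits)
      ultimately show ?thesis
        unfolding wT1 wT2 sinA sT1 sT2 rT1 rT2 using yx xy(1) s by (auto simp: abs_mult)
    qed
    show ?thesis using part1 part2 unfolding Let_def T1_def T2_def a_def s_def by blast
  qed
  show ?thesis using main by blast
qed

end
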